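(* Let $N\ge1$, $V=\{1,\dots,N\}$, $A$ an $N\times N$ row-stochastic matrix, and $\sigma_1,\sigma_2,\dots$ random variables with values in $2^V$. Consider $x(k+1)=A_{\sigma_k}x(k)$, $k\ge1$, with deterministic $x(1)\in\mathbb R^N$. Suppose: (a) $\mathcal G(A)$ is rooted and some root $r\in\mathbbm r(A)$ has a self-loop, i.e. $a_{rr}>0$. (b) There exists $\alpha>0$ such that whenever $\mathbb P(\sigma_k\mid\sigma_{k-1},\dots,\sigma_1)\neq0$, it is $\ge\alpha$. (c) There exists $q>0$ such that for every $k\ge1$ and every given value of $(\sigma_{k-1},\dots,\sigma_1)$, $\bigcup_{w=0}^{q-1}\bigcup_{\sigma\in\mathscr I_{\sigma_{(k-1):1}}(w)}\sigma=V$, where $\mathscr I_{\sigma_{(k-1):1}}(w)=\{\sigma:\mathbb P(\sigma_{k+w}=\sigma\mid\sigma_{k-1},\dots,\sigma_1)\neq0\}$. Then the iteration reaches consensus almost surely.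
   Context: $\mathcal G(A)$ is the directed graph on $V$ with an edge $(j,i)$ iff $a_{ij}>0$; it is rooted if some node $r$ has a directed path to every other node, and $\mathbbm r(A)$ is the set of such roots. For $\sigma\subseteq V$, $A_\sigma$ is the matrix whose $j$-th row equals the $j$-th row of $A$ if $j\in\sigma$ and $e_j^T$ otherwise. For $k=1$ conditional probabilities given the empty past are unconditional. The iteration reaches consensus almost surely if for every $\varepsilon>0$ and every $x(1)$, $\lim_{k\to\infty}\mathbb P\big(\sum_{j=1}^N (x_j(k)-\frac1N\sum_{i=1}^N x_i(k))^2\ge\varepsilon\big)=0$. *)

theory Defs
  imports "HOL-Probability.Probability"
begin

definition row_stochastic :: "real^'n^'n \<Rightarrow> bool" where
  "row_stochastic A \<longleftrightarrow> (\<forall>i j. A$i$j \<ge> 0) \<and> (\<forall>i. (\<Sum>j\<in>UNIV. A$i$j) = 1)"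

definition graph_edges :: "real^'n^'n \<Rightarrow> ('n \<times> 'n) set" where
  "graph_edges A = {(j, i). A$i$j > 0}"

definition roots :: "real^'n^'n \<Rightarrow> 'n set" where
  "roots A = {r. \<forall>i. i \<noteq> r \<longrightarrow> (r, i) \<in> (graph_edges A)\<^sup>+}"

definition rooted :: "real^'n^'n \<Rightarrow> bool" where
  "rooted A \<longleftrightarrow> roots A \<noteq> {}"

definition sub_mat :: "real^'n^'n \<Rightarrow> 'n set \<Rightarrow> real^'n^'n" where
  "sub_mat A s = (\<chi> j. if j \<in> s then A$j else axis j 1)"

definition past_event :: "'a measure \<Rightarrow> (nat \<Rightarrow> 'a \<Rightarrow> 'n set) \<Rightarrow> nat \<Rightarrow> (nat \<Rightarrow> 'n set) \<Rightarrow> 'a set" where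
  "past_event M \<sigma> k h = {\<omega> \<in> space M. \<forall>i\<in>{1..<k}. \<sigma> i \<omega> = h i}"

definition cond_prob :: "'a measure \<Rightarrow> (nat \<Rightarrow> 'a \<Rightarrow> 'n set) \<Rightarrow> nat \<Rightarrow> (nat \<Rightarrow> 'n set) \<Rightarrow> nat \<Rightarrow> 'n set \<Rightarrow> real" where
  "cond_prob M \<sigma> k h m s =
     measure M {\<omega> \<in> past_event M \<sigma> k h. \<sigma> m \<omega> = s} / measure M (past_event M \<sigma> k h)"

text \<open>Trajectory: traj A sigma x1 k = x(k+1); x(1) = x1, x(k+1) = A_{sigma_k} x(k).\<close>
primrec traj :: "real^'n^'n \<Rightarrow> (nat \<Rightarrow> 'a \<Rightarrow> 'n set) \<Rightarrow> real^'n \<Rightarrow> nat \<Rightarrow> 'a \<Rightarrow> real^'n" where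
  "traj A \<sigma> x1 0 \<omega> = x1"
| "traj A \<sigma> x1 (Suc k) \<omega> = sub_mat A (\<sigma> (Suc k) \<omega>) *v traj A \<sigma> x1 k \<omega>"

definition disagreement :: "real^'n \<Rightarrow> real" where
  "disagreement x = (\<Sum>j\<in>UNIV. (x$j - (\<Sum>i\<in>UNIV. x$i) / real CARD('n))^2)"

end

theory Submission
  imports Defs
begin


lemma sub_mat_mult_nth:
  "(sub_mat A s *v z) $ i = (if i \<in> s then (\<Sum>j\<in>UNIV. A$i$j * z$j) else z$i)"
proof (cases "i \<in> s")
  case False
  have "(\<Sum>j\<in>UNIV. axis i 1 $ j * z$j) = (\<Sum>j\<in>UNIV. if j = i then z$j else 0)"
    by (rule sum.cong) (auto simp: axis_def)
  then show ?thesis using False by (simp add: sub_mat_def matrix_vector_mult_def)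
qed (simp add: sub_mat_def matrix_vector_mult_def)

primrec run :: "real^'n^'n \<Rightarrow> (nat \<Rightarrow> 'n set) \<Rightarrow> nat \<Rightarrow> real^'n \<Rightarrow> nat \<Rightarrow> real^'n" where
  "run A h k y 0 = y"
| "run A h k y (Suc t) = sub_mat A (h (k + Suc t)) *v run A h k y t"

primrec reach :: "real^'n^'n \<Rightarrow> 'n \<Rightarrow> (nat \<Rightarrow> 'n set) \<Rightarrow> nat \<Rightarrow> nat \<Rightarrow> 'n set" where
  "reach A r h k 0 = {r}"
| "reach A r h k (Suc t) = reach A r h k t \<union> {i \<in> h (k + Suc t). \<exists>j\<in>reach A r h k t. A$i$j > 0}"

lemma run_neg: "run A h k (-y) t = - run A h k y t"
  by (induction t) (auto simp: vec_eq_iff sub_mat_mult_nth sum_negf)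

lemma reach_mono: "t \<le> t' \<Longrightarrow> reach A r h k t \<subseteq> reach A r h k t'"
  by (induction t' rule: dec_induct) auto

lemma reach_cong: "(\<And>i. k < i \<Longrightarrow> i \<le> k + t \<Longrightarrow> h i = h' i) \<Longrightarrow> reach A r h k t = reach A r h' k t"
  by (induction t) auto

lemma run_cong: "(\<And>i. k < i \<Longrightarrow> i \<le> k + t \<Longrightarrow> h i = h' i) \<Longrightarrow> run A h k y t = run A h' k y t"
  by (induction t) auto

lemma rs_sum_shift:
  assumes "row_stochastic A"
  shows "(\<Sum>j\<in>UNIV. A$i$j * z$j) - m = (\<Sum>j\<in>UNIV. A$i$j * (z$j - m))"
proof -
  have "(\<Sum>j\<in>UNIV. A$i$j * (z$j - m)) = (\<Sum>j\<in>UNIV. A$i$j * z$j) - (\<Sum>j\<in>UNIV. A$i$j) * m"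
    by (simp add: right_diff_distrib sum_subtractf sum_distrib_right)
  then show ?thesis using assms by (simp add: row_stochastic_def)
qed

lemma run_lower:
  fixes A :: "real^'n^'n"
  assumes rs: "row_stochastic A" and arr: "A$r$r > 0"
    and a: "a > 0" "a \<le> 1" "\<And>i j. A$i$j > 0 \<Longrightarrow> a \<le> A$i$j"
    and ym: "\<And>i. m \<le> y$i"
  shows "(\<forall>i. m \<le> run A h k y t $ i) \<and> (\<forall>i\<in>reach A r h k t. a^t * (y$r - m) \<le> run A h k y t $ i - m)
     \<and> (\<forall>i\<in>reach A r h k t. \<exists>j\<in>reach A r h k t. A$i$j > 0)"
proof (induction t)
  case 0
  then show ?case using ym arr by auto
next
  case (Suc t)
  let ?z = "run A h k y t"
  let ?R = "reach A r h k t"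
  have nn: "0 \<le> A$i$j" for i j using rs by (simp add: row_stochastic_def)
  have zm: "\<And>i. m \<le> ?z$i" using Suc by blast
  have lb: "A$i$j * (?z$j - m) \<le> (\<Sum>j\<in>UNIV. A$i$j * ?z$j) - m" for i j
  proof -
    have "A$i$j * (?z$j - m) \<le> (\<Sum>j\<in>UNIV. A$i$j * (?z$j - m))"
      by (rule member_le_sum) (auto intro!: mult_nonneg_nonneg nn simp: zm)
    then show ?thesis using rs_sum_shift[OF rs] by simp
  qed
  have yr: "0 \<le> y$r - m" using ym by auto
  have A1: "\<forall>i. m \<le> run A h k y (Suc t) $ i"
  proof
    fix i
    show "m \<le> run A h k y (Suc t) $ i"
      using lb[of i i] zm[of i] mult_nonneg_nonneg[OF nn[of i i], of "?z$i - m"] by (auto simp: sub_mat_mult_nth)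
  qed
  have key: "a^(Suc t) * (y$r - m) \<le> run A h k y (Suc t) $ i - m"
    if i: "i \<in> reach A r h k (Suc t)" for i
  proof -
    have at: "a^(Suc t) * (y$r - m) \<le> a^t * (y$r - m)"
      using a yr by (simp add: mult_right_mono power_le_one mult_left_le_one_le)
    show ?thesis
    proof (cases "i \<in> h (k + Suc t)")
      case True
      then obtain j where j: "j \<in> ?R" "A$i$j > 0" using i Suc by auto
      have "a^(Suc t) * (y$r - m) = a * (a^t * (y$r - m))" by simp
      also have "\<dots> \<le> A$i$j * (?z$j - m)"
        using j Suc a(3)[OF j(2)] a yr by (intro mult_mono) auto
      also have "\<dots> \<le> run A h k y (Suc t) $ i - m"
        using lb[of i j] True by (simp add: sub_mat_mult_nth)
      finally show ?thesis .
    next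
      case False
      then have "i \<in> ?R" using i by auto
      then have "a^t * (y$r - m) \<le> ?z$i - m" using Suc by blast
      then show ?thesis using False at by (simp add: sub_mat_mult_nth)
    qed
  qed
  have A3: "\<forall>i\<in>reach A r h k (Suc t). \<exists>j\<in>reach A r h k (Suc t). A$i$j > 0"
    using Suc reach_mono[of t "Suc t" A r h k] by auto
  show ?case using A1 key A3 by blast
qed

definition spread :: "real^'n \<Rightarrow> real" where
  "spread y = Max (range (\<lambda>i. y$i)) - Min (range (\<lambda>i. y$i))"

lemma le_Max_y: "y$i \<le> Max (range (\<lambda>i. y$i))" by simp
lemma Min_le_y: "Min (range (\<lambda>i. y$i)) \<le> y$i" by simp

lemma spread_nonneg: "0 \<le> spread y"
  using le_Max_y[of y undefined] Min_le_y[of y undefined] by (simp add: spread_def)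

lemma spread_le:
  assumes "\<And>i. m \<le> y$i" "\<And>i. y$i \<le> u" shows "spread y \<le> u - m"
proof -
  have "Max (range (\<lambda>i. y$i)) \<le> u" using assms by (simp add: Max_le_iff)
  moreover have "m \<le> Min (range (\<lambda>i. y$i))" using assms by (simp add: Min_ge_iff)
  ultimately show ?thesis unfolding spread_def by linarith
qed

lemma run_bounds:
  fixes A :: "real^'n^'n"
  assumes rs: "row_stochastic A" and arr: "A$r$r > 0"
    and a: "a > 0" "a \<le> 1" "\<And>i j. A$i$j > 0 \<Longrightarrow> a \<le> A$i$j"
  shows "Min (range (\<lambda>i. y$i)) \<le> run A h k y t $ i \<and> run A h k y t $ i \<le> Max (range (\<lambda>i. y$i))"
proof -
  have 1: "Min (range (\<lambda>i. y$i)) \<le> run A h k y t $ i"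
    using run_lower[OF rs arr a, of "Min (range (\<lambda>i. y$i))" y h k t] by simp
  have prem: "\<And>i. - Max (range (\<lambda>i. y$i)) \<le> (-y)$i" by simp
  have "- Max (range (\<lambda>i. y$i)) \<le> run A h k (-y) t $ i"
    using run_lower[OF rs arr a prem, of h k t] by blast
  then have "- Max (range (\<lambda>i. y$i)) \<le> - (run A h k y t $ i)"
    by (simp only: run_neg vector_uminus_component)
  then have 2: "run A h k y t $ i \<le> Max (range (\<lambda>i. y$i))" by linarith
  show ?thesis using 1 2 by simp
qed

lemma run_spread_mono:
  fixes A :: "real^'n^'n"
  assumes rs: "row_stochastic A" and arr: "A$r$r > 0"
    and a: "a > 0" "a \<le> 1" "\<And>i j. A$i$j > 0 \<Longrightarrow> a \<le> A$i$j"
  shows "spread (run A h k y t) \<le> spread y"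
  using run_bounds[OF rs arr a] by (auto simp: spread_def intro!: spread_le[simplified spread_def])

lemma run_spread_contract:
  fixes A :: "real^'n^'n"
  assumes rs: "row_stochastic A" and arr: "A$r$r > 0"
    and a: "a > 0" "a \<le> 1" "\<And>i j. A$i$j > 0 \<Longrightarrow> a \<le> A$i$j"
    and R: "reach A r h k t = UNIV"
  shows "spread (run A h k y t) \<le> (1 - a^t) * spread y"
proof -
  define m where "m = Min (range (\<lambda>i. y$i))"
  define u where "u = Max (range (\<lambda>i. y$i))"
  have pm: "\<And>i. m \<le> y$i" by (simp add: m_def)
  have pu: "\<And>i. -u \<le> (-y)$i" by (simp add: u_def)
  have lo: "m + a^t * (y$r - m) \<le> run A h k y t $ i" for i
  proof -
    have "a^t * (y$r - m) \<le> run A h k y t $ i - m"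
      using run_lower[OF rs arr a pm, of h k t] R by blast
    then show ?thesis by linarith
  qed
  have neg: "- u + a^t * (- y$r + u) \<le> run A h k (-y) t $ i" for i
  proof -
    have "a^t * ((-y)$r - (-u)) \<le> run A h k (-y) t $ i - (-u)"
      using run_lower[OF rs arr a pu, of h k t] R by blast
    then show ?thesis by simp
  qed
  have hi: "run A h k y t $ i \<le> u - a^t * (u - y$r)" for i
  proof -
    have "- u + a^t * (- y$r + u) \<le> - (run A h k y t $ i)"
      using neg[of i] by (simp only: run_neg vector_uminus_component)
    then show ?thesis by (simp add: algebra_simps)
  qed
  have "spread (run A h k y t) \<le> (u - a^t * (u - y$r)) - (m + a^t * (y$r - m))"
    by (rule spread_le[OF lo hi])
  also have "\<dots> = (1 - a^t) * spread y" unfolding spread_def m_def[symmetric] u_def[symmetric]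
    by (simp add: algebra_simps)
  finally show ?thesis .
qed


lemma trancl_cross:
  assumes "(x, y) \<in> G\<^sup>+" "x \<in> R" "y \<notin> R"
  shows "\<exists>a b. (a, b) \<in> G \<and> a \<in> R \<and> b \<notin> R"
  using assms by (induction rule: trancl_induct) blast+

locale cons = prob_space M for M :: "'a measure" +
  fixes A :: "real^'n^'n" and \<sigma> :: "nat \<Rightarrow> 'a \<Rightarrow> 'n set" and \<alpha> :: real and q :: nat and r :: 'n
  assumes meas: "\<And>k. k \<ge> 1 \<Longrightarrow> \<sigma> k \<in> M \<rightarrow>\<^sub>M count_space UNIV"
    and rs: "row_stochastic A" and root: "r \<in> roots A" and arr: "A$r$r > 0"
    and apos: "\<alpha> > 0"
    and hb: "\<forall>k\<ge>1. \<forall>h s. cond_prob M \<sigma> k h k s \<noteq> 0 \<longrightarrow> cond_prob M \<sigma> k h k s \<ge> \<alpha>"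
    and qpos: "q > 0"
    and hc: "\<forall>k\<ge>1. \<forall>h. measure M (past_event M \<sigma> k h) \<noteq> 0 \<longrightarrow>
           (\<Union>w\<in>{0..<q}. \<Union>{s. cond_prob M \<sigma> k h (k + w) s \<noteq> 0}) = UNIV"
begin

definition E :: "nat \<Rightarrow> (nat \<Rightarrow> 'n set) \<Rightarrow> 'a set" where
  "E k h = past_event M \<sigma> (Suc k) h"

definition P :: "nat \<Rightarrow> (nat \<Rightarrow> 'n set) \<Rightarrow> real" where
  "P k h = measure M (E k h)"

definition \<beta> :: real where "\<beta> = min \<alpha> 1"

lemma beta_pos: "0 < \<beta>" and beta_le1: "\<beta> \<le> 1"
  using apos by (auto simp: \<beta>_def)

lemma E_alt: "E k h = {\<omega>\<in>space M. \<forall>i\<in>{1..k}. \<sigma> i \<omega> = h i}"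
  unfolding E_def past_event_def by (simp add: atLeastLessThanSuc_atLeastAtMost)

lemma E_0: "E 0 h = space M" by (simp add: E_alt)

lemma E_Suc: "E (Suc k) h = {\<omega>\<in>E k h. \<sigma> (Suc k) \<omega> = h (Suc k)}"
  unfolding E_alt by (simp add: atLeastAtMostSuc_conv) blast

lemma E_cong: "(\<And>i. i \<in> {1..k} \<Longrightarrow> h i = h' i) \<Longrightarrow> E k h = E k h'"
  unfolding E_alt by auto

lemma E_mono: "j \<le> k \<Longrightarrow> E k h \<subseteq> E j h"
  unfolding E_alt by auto

lemma E_space: "E k h \<subseteq> space M" unfolding E_alt by auto

lemma Sel_sets: "S \<in> sets M \<Longrightarrow> m \<ge> 1 \<Longrightarrow> {\<omega>\<in>S. \<sigma> m \<omega> = s} \<in> sets M"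
proof -
  assume S: "S \<in> sets M" and m: "m \<ge> 1"
  have "{\<omega>\<in>S. \<sigma> m \<omega> = s} = S \<inter> (\<sigma> m -` {s} \<inter> space M)"
    using sets.sets_into_space[OF S] by auto
  moreover have "\<sigma> m -` {s} \<inter> space M \<in> sets M"
    using measurable_sets[OF meas[OF m]] by simp
  ultimately show ?thesis using S by auto
qed

lemma E_sets: "E k h \<in> sets M"
proof (induction k)
  case 0 then show ?case by (simp add: E_0)
next
  case (Suc k) then show ?case unfolding E_Suc by (intro Sel_sets) auto
qed

lemma P_nonneg: "0 \<le> P k h" by (simp add: P_def)

lemma P_mono: "j \<le> k \<Longrightarrow> P k h \<le> P j h"
  unfolding P_def by (intro finite_measure_mono E_mono E_sets)

lemma split_pos:
  assumes S: "S \<in> sets M" and pos: "measure M S > 0" and m: "m \<ge> 1"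
  shows "\<exists>s. measure M {\<omega>\<in>S. \<sigma> m \<omega> = s} > 0"
proof (rule ccontr)
  assume "\<nexists>s. measure M {\<omega>\<in>S. \<sigma> m \<omega> = s} > 0"
  then have z: "\<And>s. measure M {\<omega>\<in>S. \<sigma> m \<omega> = s} \<le> 0" by (meson not_less)
  have "S = (\<Union>s\<in>UNIV. {\<omega>\<in>S. \<sigma> m \<omega> = s})" by auto
  then have "measure M S \<le> (\<Sum>s\<in>UNIV. measure M {\<omega>\<in>S. \<sigma> m \<omega> = s})"
    using finite_measure_subadditive_finite[of UNIV "\<lambda>s. {\<omega>\<in>S. \<sigma> m \<omega> = s}"] Sel_sets[OF S m]
    by auto
  also have "\<dots> \<le> 0" using z by (simp add: sum_nonpos)
  finally show False using pos by simp
qed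

lemma step_bound:
  assumes pos: "P (Suc k) h > 0"
  shows "\<beta> * P k h \<le> P (Suc k) h"
proof -
  have le: "P (Suc k) h \<le> P k h" by (rule P_mono) simp
  have cp: "cond_prob M \<sigma> (Suc k) h (Suc k) (h (Suc k)) = P (Suc k) h / P k h"
    by (simp only: cond_prob_def P_def E_Suc[of k h, unfolded E_def[of k h]] E_def[of k h])
  have "P k h > 0" using pos le by simp
  then have "cond_prob M \<sigma> (Suc k) h (Suc k) (h (Suc k)) \<noteq> 0" using cp pos by simp
  then have "\<alpha> \<le> P (Suc k) h / P k h" using hb[rule_format, of "Suc k" h "h (Suc k)"] cp by simp
  then have "\<alpha> * P k h \<le> P (Suc k) h" using \<open>P k h > 0\<close> by (simp add: pos_le_divide_eq)
  moreover have "\<beta> * P k h \<le> \<alpha> * P k h"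
    using \<open>P k h > 0\<close> by (intro mult_right_mono) (auto simp: \<beta>_def)
  ultimately show ?thesis by simp
qed

lemma chain:
  assumes "k \<le> m" "P m h > 0"
  shows "\<beta>^(m-k) * P k h \<le> P m h"
  using assms
proof (induction m rule: dec_induct)
  case base then show ?case by simp
next
  case (step m)
  have "P (Suc m) h \<le> P m h" by (rule P_mono) simp
  then have "P m h > 0" using step by simp
  then have ih: "\<beta>^(m-k) * P k h \<le> P m h" using step by simp
  have "\<beta>^(Suc m - k) * P k h = \<beta> * (\<beta>^(m-k) * P k h)"
    using step(1) by (simp add: Suc_diff_le)
  also have "\<dots> \<le> \<beta> * P m h" using ih beta_pos by simp
  also have "\<dots> \<le> P (Suc m) h" using step_bound step by simp
  finally show ?case .
qed

lemma extend:
  assumes "measure M {\<omega>\<in>E k h. \<sigma> (k + Suc d) \<omega> = s} > 0"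
  shows "\<exists>h'. (\<forall>i\<in>{1..k}. h' i = h i) \<and> h' (k + Suc d) = s \<and> P (k + Suc d) h' > 0"
  using assms
proof (induction d arbitrary: k h)
  case 0
  let ?h = "h(Suc k := s)"
  have "{\<omega>\<in>E k h. \<sigma> (k + Suc 0) \<omega> = s} = E (Suc k) ?h"
    unfolding E_Suc using E_cong[of k h ?h] by auto
  then have "P (Suc k) ?h > 0" using 0 by (simp add: P_def)
  then show ?case by (intro exI[of _ ?h]) (simp add: fun_upd_def)
next
  case (Suc d)
  let ?S = "{\<omega>\<in>E k h. \<sigma> (k + Suc (Suc d)) \<omega> = s}"
  have S: "?S \<in> sets M" by (intro Sel_sets E_sets) simp
  obtain s' where s': "measure M {\<omega>\<in>?S. \<sigma> (Suc k) \<omega> = s'} > 0"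
    using split_pos[OF S Suc.prems] by auto
  define h2 where "h2 = h(Suc k := s')"
  have "{\<omega>\<in>?S. \<sigma> (Suc k) \<omega> = s'} = {\<omega>\<in>E (Suc k) h2. \<sigma> (Suc k + Suc d) \<omega> = s}"
    unfolding E_Suc h2_def using E_cong[of k h "h(Suc k := s')"] by auto
  then have pos2: "measure M {\<omega>\<in>E (Suc k) h2. \<sigma> (Suc k + Suc d) \<omega> = s} > 0" using s' by simp
  obtain h' where h': "\<forall>i\<in>{1..Suc k}. h' i = h2 i" "h' (Suc k + Suc d) = s" "P (Suc k + Suc d) h' > 0"
    using Suc.IH[OF pos2] by blast
  have "\<forall>i\<in>{1..k}. h' i = h i" using h'(1) by (auto simp: h2_def)
  then show ?case using h' by (intro exI[of _ h']) auto
qed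

lemma hit:
  assumes pos: "P k h > 0"
  shows "\<exists>w h'. w < q \<and> (\<forall>i\<in>{1..k}. h' i = h i) \<and> v \<in> h' (k + Suc w) \<and> \<beta>^(Suc w) * P k h \<le> P (k + Suc w) h'"
proof -
  have "measure M (past_event M \<sigma> (Suc k) h) \<noteq> 0" using pos by (simp add: P_def E_def)
  then have "v \<in> (\<Union>w\<in>{0..<q}. \<Union>{s. cond_prob M \<sigma> (Suc k) h (Suc k + w) s \<noteq> 0})"
    using hc[rule_format, of "Suc k" h] by simp
  then obtain w s where w: "w < q" "v \<in> s" "cond_prob M \<sigma> (Suc k) h (Suc k + w) s \<noteq> 0" by auto
  then have "measure M {\<omega>\<in>E k h. \<sigma> (k + Suc w) \<omega> = s} \<noteq> 0"
    unfolding cond_prob_def E_def by auto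
  then have "measure M {\<omega>\<in>E k h. \<sigma> (k + Suc w) \<omega> = s} > 0"
    using measure_nonneg[of M "{\<omega>\<in>E k h. \<sigma> (k + Suc w) \<omega> = s}"] by linarith
  then obtain h' where h': "\<forall>i\<in>{1..k}. h' i = h i" "h' (k + Suc w) = s" "P (k + Suc w) h' > 0"
    using extend by blast
  have "\<beta>^(k + Suc w - k) * P k h' \<le> P (k + Suc w) h'" by (rule chain) (use h' in auto)
  moreover have "E k h' = E k h" by (rule E_cong) (use h' in auto)
  then have "P k h' = P k h" unfolding P_def by simp
  ultimately show ?thesis using w h' by (intro exI[of _ w] exI[of _ h']) auto
qed

lemma pad:
  assumes pos: "P k h > 0"
  shows "\<exists>h'. (\<forall>i\<in>{1..k}. h' i = h i) \<and> \<beta>^d * P k h \<le> P (k + d) h'"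
proof (induction d)
  case 0 then show ?case by (intro exI[of _ h]) auto
next
  case (Suc d)
  then obtain h' where h': "\<forall>i\<in>{1..k}. h' i = h i" "\<beta>^d * P k h \<le> P (k + d) h'" by auto
  have "0 < \<beta>^d * P k h" using pos beta_pos by simp
  then have p: "P (k + d) h' > 0" using h' by simp
  obtain s where s: "measure M {\<omega>\<in>E (k+d) h'. \<sigma> (Suc (k+d)) \<omega> = s} > 0"
    using split_pos[OF E_sets p[unfolded P_def]] by auto
  let ?h = "h'(Suc (k+d) := s)"
  have eq: "{\<omega>\<in>E (k+d) h'. \<sigma> (Suc (k+d)) \<omega> = s} = E (Suc (k+d)) ?h"
    unfolding E_Suc using E_cong[of "k+d" h' ?h] by auto
  have "P (Suc (k+d)) ?h > 0" using s eq by (simp add: P_def)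
  then have "\<beta> * P (k+d) ?h \<le> P (Suc (k+d)) ?h" by (rule step_bound)
  moreover have "P (k+d) ?h = P (k+d) h'" unfolding P_def using E_cong[of "k+d" h' ?h] by auto
  moreover have "\<beta> * (\<beta>^d * P k h) \<le> \<beta> * P (k+d) h'"
    using h'(2) beta_pos by (simp add: mult_left_mono)
  ultimately have "\<beta> * (\<beta>^d * P k h) \<le> P (k + Suc d) ?h" by simp
  then show ?case using h' by (intro exI[of _ ?h]) (simp add: fun_upd_def)
qed

lemma cross:
  assumes "reach A r h k t \<noteq> UNIV" "r \<in> reach A r h k t"
  shows "\<exists>v j. v \<notin> reach A r h k t \<and> j \<in> reach A r h k t \<and> A$v$j > 0"
proof -
  obtain u where u: "u \<notin> reach A r h k t" using assms by auto
  then have "u \<noteq> r" using assms by auto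
  then have "(r, u) \<in> (graph_edges A)\<^sup>+" using root by (auto simp: roots_def)
  then obtain a b where "(a, b) \<in> graph_edges A" "a \<in> reach A r h k t" "b \<notin> reach A r h k t"
    using trancl_cross[of r u "graph_edges A" "reach A r h k t"] u assms(2) by blast
  then show ?thesis by (auto simp: graph_edges_def)
qed

lemma r_reach: "r \<in> reach A r h k t"
  using reach_mono[of 0 t A r h k] by auto

lemma claim:
  assumes pos: "P k h > 0"
  shows "\<exists>t h'. t \<le> c*q \<and> (\<forall>i\<in>{1..k}. h' i = h i) \<and> \<beta>^t * P k h \<le> P (k+t) h'
     \<and> (c < card (reach A r h' k t) \<or> reach A r h' k t = UNIV)"
proof (induction c)
  case 0 then show ?case by (intro exI[of _ 0] exI[of _ h]) auto
next
  case (Suc c)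
  then obtain t h' where th: "t \<le> c*q" "\<forall>i\<in>{1..k}. h' i = h i" "\<beta>^t * P k h \<le> P (k+t) h'"
     "c < card (reach A r h' k t) \<or> reach A r h' k t = UNIV" by blast
  show ?case
  proof (cases "reach A r h' k t = UNIV")
    case True then show ?thesis using th by (intro exI[of _ t] exI[of _ h']) auto
  next
    case False
    let ?R = "reach A r h' k t"
    have cR: "c < card ?R" using th False by auto
    obtain v j where vj: "v \<notin> ?R" "j \<in> ?R" "A$v$j > 0" using cross[OF False r_reach] by blast
    have "0 < \<beta>^t * P k h" using pos beta_pos by simp
    then have p: "P (k+t) h' > 0" using th by simp
    obtain w h'' where wh: "w < q" "\<forall>i\<in>{1..k+t}. h'' i = h' i" "v \<in> h'' (k + t + Suc w)"
       "\<beta>^(Suc w) * P (k+t) h' \<le> P (k + t + Suc w) h''"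
      using hit[OF p, of v] by blast
    have Req: "reach A r h'' k t = ?R" by (rule reach_cong) (use wh(2) in auto)
    have sub1: "reach A r h'' k t \<subseteq> reach A r h'' k (t + w)" by (rule reach_mono) simp
    have "v \<in> reach A r h'' k (Suc (t + w))"
      using wh(3) vj sub1 Req by (auto simp: add.assoc)
    moreover have "reach A r h'' k (t + w) \<subseteq> reach A r h'' k (Suc (t + w))" by (rule reach_mono) simp
    ultimately have sub: "insert v ?R \<subseteq> reach A r h'' k (Suc (t + w))" using sub1 Req by auto
    have "card (insert v ?R) \<le> card (reach A r h'' k (Suc (t + w)))"
      by (rule card_mono[OF _ sub]) simp
    moreover have "card (insert v ?R) = Suc (card ?R)" using vj by simp
    ultimately have card: "Suc c < card (reach A r h'' k (Suc (t + w)))" using cR by simp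
    have tle: "Suc (t + w) \<le> Suc c * q" using th(1) wh(1) by simp
    have "\<beta>^(Suc (t + w)) * P k h = \<beta>^(Suc w) * (\<beta>^t * P k h)" by (simp add: power_add)
    also have "\<dots> \<le> \<beta>^(Suc w) * P (k+t) h'" using th(3) beta_pos by (simp add: mult_left_mono)
    also have "\<dots> \<le> P (k + Suc (t + w)) h''" using wh(4) by (simp add: add.assoc)
    finally have bnd: "\<beta>^(Suc (t + w)) * P k h \<le> P (k + Suc (t + w)) h''" .
    have agr: "\<forall>i\<in>{1..k}. h'' i = h i" using wh(2) th(2) by auto
    show ?thesis using tle agr bnd card by (intro exI[of _ "Suc (t + w)"] exI[of _ h'']) auto
  qed
qed

definition L :: nat where "L = CARD('n) * q"

lemma L_pos: "L > 0" using qpos by (simp add: L_def)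

lemma good:
  assumes pos: "P k h > 0"
  shows "\<exists>h'. (\<forall>i\<in>{1..k}. h' i = h i) \<and> \<beta>^L * P k h \<le> P (k+L) h' \<and> reach A r h' k L = UNIV"
proof -
  obtain t h' where th: "t \<le> L" "\<forall>i\<in>{1..k}. h' i = h i" "\<beta>^t * P k h \<le> P (k+t) h'"
     "CARD('n) < card (reach A r h' k t) \<or> reach A r h' k t = UNIV"
    using claim[OF pos, of "CARD('n)"] unfolding L_def by blast
  have RU: "reach A r h' k t = UNIV" using th(4) card_mono[of UNIV "reach A r h' k t"] by auto
  have "0 < \<beta>^t * P k h" using pos beta_pos by simp
  then have p: "P (k+t) h' > 0" using th by simp
  obtain h'' where h'': "\<forall>i\<in>{1..k+t}. h'' i = h' i" "\<beta>^(L-t) * P (k+t) h' \<le> P (k + t + (L - t)) h''"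
    using pad[OF p] by blast
  have "\<beta>^L * P k h = \<beta>^(L-t) * (\<beta>^t * P k h)" using th(1) by (simp add: power_add[symmetric])
  also have "\<dots> \<le> \<beta>^(L-t) * P (k+t) h'" using th(3) beta_pos by (simp add: mult_left_mono)
  also have "\<dots> \<le> P (k+L) h''" using h''(2) th(1) by simp
  finally have bnd: "\<beta>^L * P k h \<le> P (k+L) h''" .
  have "reach A r h'' k t = UNIV" using RU reach_cong[of k t h'' h' A r] h''(1) by auto
  then have "reach A r h'' k L = UNIV" using reach_mono[OF th(1), of A r h'' k] by auto
  then show ?thesis using bnd h''(1) th(2) by (intro exI[of _ h'']) auto
qed

end

lemma disagreement_le: "disagreement (y::real^'n) \<le> real CARD('n) * (spread y)^2"
proof -
  let ?mx = "Max (range (\<lambda>i. y$i))" and ?mn = "Min (range (\<lambda>i. y$i))"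
  let ?mu = "(\<Sum>i\<in>UNIV. y$i) / real CARD('n)"
  have N: "real CARD('n) > 0" by simp
  have "(\<Sum>i::'n\<in>UNIV. ?mn) \<le> (\<Sum>i\<in>UNIV. y$i)" by (intro sum_mono) simp
  then have lo: "?mn \<le> ?mu" using N by (simp add: pos_le_divide_eq mult.commute)
  have "(\<Sum>i\<in>UNIV. y$i) \<le> (\<Sum>i::'n\<in>UNIV. ?mx)" by (intro sum_mono) simp
  then have hi: "?mu \<le> ?mx" using N by (simp add: pos_divide_le_eq mult.commute)
  have "(y$j - ?mu)^2 \<le> (spread y)^2" for j
  proof -
    have "\<bar>y$j - ?mu\<bar> \<le> spread y"
      using lo hi le_Max_y[of y j] Min_le_y[of y j] unfolding spread_def by linarith
    then have "\<bar>y$j - ?mu\<bar>^2 \<le> (spread y)^2" by (intro power_mono) auto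
    then show ?thesis by simp
  qed
  then have "disagreement y \<le> (\<Sum>j::'n\<in>UNIV. (spread y)^2)"
    unfolding disagreement_def by (intro sum_mono) auto
  then show ?thesis by simp
qed

context cons begin

definition dtraj :: "real^'n \<Rightarrow> (nat \<Rightarrow> 'n set) \<Rightarrow> nat \<Rightarrow> real^'n" where
  "dtraj x1 h n = traj A (\<lambda>i (_::unit). h i) x1 n ()"

lemma dtraj_run: "dtraj x1 h (k + t) = run A h k (dtraj x1 h k) t"
  by (induction t) (simp_all add: dtraj_def)

lemma dtraj_cong: "(\<And>i. i \<in> {1..n} \<Longrightarrow> h i = h' i) \<Longrightarrow> dtraj x1 h n = dtraj x1 h' n"
  by (induction n) (simp_all add: dtraj_def)

lemma traj_E: "(\<forall>i\<in>{1..n}. \<sigma> i \<omega> = h i) \<Longrightarrow> traj A \<sigma> x1 n \<omega> = dtraj x1 h n"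
  by (induction n) (simp_all add: dtraj_def)

definition H :: "nat \<Rightarrow> (nat \<Rightarrow> 'n set) set" where
  "H n = PiE {1..n} (\<lambda>_. UNIV)"

definition hist :: "nat \<Rightarrow> 'a \<Rightarrow> (nat \<Rightarrow> 'n set)" where
  "hist n \<omega> = restrict (\<lambda>i. \<sigma> i \<omega>) {1..n}"

lemma finite_H: "finite (H n)" unfolding H_def by (intro finite_PiE) auto

lemma hist_H: "hist n \<omega> \<in> H n" by (simp add: hist_def H_def)

lemma E_hist: "\<omega> \<in> space M \<Longrightarrow> \<omega> \<in> E n (hist n \<omega>)"
  by (simp add: E_alt hist_def)

lemma H_eqI: "h \<in> H n \<Longrightarrow> h' \<in> H n \<Longrightarrow> (\<And>i. i \<in> {1..n} \<Longrightarrow> h i = h' i) \<Longrightarrow> h = h'"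
  unfolding H_def by (rule PiE_ext) auto

lemma E_disj: "h \<in> H n \<Longrightarrow> h' \<in> H n \<Longrightarrow> h \<noteq> h' \<Longrightarrow> E n h \<inter> E n h' = {}"
proof (rule ccontr)
  assume hh: "h \<in> H n" "h' \<in> H n" "h \<noteq> h'" "E n h \<inter> E n h' \<noteq> {}"
  then obtain \<omega> where "\<omega> \<in> E n h" "\<omega> \<in> E n h'" by auto
  then have "\<And>i. i \<in> {1..n} \<Longrightarrow> h i = h' i" unfolding E_alt by auto
  then show False using H_eqI hh by blast
qed

definition Ext :: "nat \<Rightarrow> nat \<Rightarrow> (nat \<Rightarrow> 'n set) \<Rightarrow> (nat \<Rightarrow> 'n set) set" where
  "Ext k d h = {h' \<in> H (k+d). restrict h' {1..k} = h}"

lemma Ext_agree: "h' \<in> Ext k d h \<Longrightarrow> i \<in> {1..k} \<Longrightarrow> h' i = h i"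
  unfolding Ext_def by (metis (mono_tags, lifting) mem_Collect_eq restrict_apply')

lemma finite_Ext: "finite (Ext k d h)" unfolding Ext_def using finite_H by simp

lemma mass:
  assumes h: "h \<in> H k"
  shows "(\<Sum>h'\<in>Ext k d h. P (k+d) h') = P k h"
proof -
  have eq: "E k h = (\<Union>h'\<in>Ext k d h. E (k+d) h')"
  proof
    show "E k h \<subseteq> (\<Union>h'\<in>Ext k d h. E (k+d) h')"
    proof
      fix \<omega> assume w: "\<omega> \<in> E k h"
      then have sp: "\<omega> \<in> space M" using E_space by auto
      have "restrict (hist (k+d) \<omega>) {1..k} = h"
      proof (rule H_eqI[OF _ h])
        show "restrict (hist (k+d) \<omega>) {1..k} \<in> H k" by (simp add: H_def)
        fix i assume "i \<in> {1..k}"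
        then show "restrict (hist (k+d) \<omega>) {1..k} i = h i" using w by (auto simp: hist_def E_alt)
      qed
      then have "hist (k+d) \<omega> \<in> Ext k d h" using hist_H by (simp add: Ext_def)
      then show "\<omega> \<in> (\<Union>h'\<in>Ext k d h. E (k+d) h')" using E_hist[OF sp] by blast
    qed
  next
    show "(\<Union>h'\<in>Ext k d h. E (k+d) h') \<subseteq> E k h"
    proof
      fix \<omega> assume "\<omega> \<in> (\<Union>h'\<in>Ext k d h. E (k+d) h')"
      then obtain h' where h': "h' \<in> Ext k d h" "\<omega> \<in> E (k+d) h'" by auto
      then show "\<omega> \<in> E k h" using Ext_agree[OF h'(1)] by (auto simp: E_alt)
    qed
  qed
  have "measure M (\<Union>h'\<in>Ext k d h. E (k+d) h') = (\<Sum>h'\<in>Ext k d h. measure M (E (k+d) h'))"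
  proof (rule measure_finite_Union)
    show "finite (Ext k d h)" by (rule finite_Ext)
    show "(\<lambda>h'. E (k+d) h') ` Ext k d h \<subseteq> sets M" using E_sets by auto
    show "disjoint_family_on (\<lambda>h'. E (k+d) h') (Ext k d h)"
      unfolding disjoint_family_on_def using E_disj by (auto simp: Ext_def)
    show "\<And>i. emeasure M (E (k+d) i) \<noteq> \<infinity>" by simp
  qed
  then show ?thesis using eq by (simp add: P_def)
qed

definition \<Phi> :: "real^'n \<Rightarrow> nat \<Rightarrow> real" where
  "\<Phi> x1 k = (\<Sum>h\<in>H k. P k h * spread (dtraj x1 h k))"

lemma Phi_nonneg: "0 \<le> \<Phi> x1 k"
  unfolding \<Phi>_def by (intro sum_nonneg mult_nonneg_nonneg P_nonneg spread_nonneg)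

lemma Phi_group: "\<Phi> x1 (k+d) = (\<Sum>h\<in>H k. \<Sum>h'\<in>Ext k d h. P (k+d) h' * spread (dtraj x1 h' (k+d)))"
proof -
  have "(\<lambda>h'. restrict h' {1..k}) ` H (k+d) \<subseteq> H k" by (auto simp: H_def)
  from sum.group[OF finite_H finite_H this, symmetric] show ?thesis
    unfolding \<Phi>_def Ext_def by simp
qed

definition a :: real where "a = Min {A$i$j |i j. A$i$j > 0}"

lemma a_props: "a > 0" "a \<le> 1" "\<And>i j. A$i$j > 0 \<Longrightarrow> a \<le> A$i$j"
proof -
  let ?S = "{A$i$j |i j. A$i$j > 0}"
  have fin: "finite ?S"
    by (rule finite_subset[of _ "(\<lambda>(i,j). A$i$j) ` UNIV"]) auto
  have ne: "A$r$r \<in> ?S" using arr by auto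
  have "a \<in> ?S" unfolding a_def using fin ne by (intro Min_in) auto
  then show "a > 0" by auto
  show le: "\<And>i j. A$i$j > 0 \<Longrightarrow> a \<le> A$i$j" unfolding a_def using fin by (intro Min_le) auto
  have "A$r$r \<le> (\<Sum>j\<in>UNIV. A$r$j)" using rs by (intro member_le_sum) (auto simp: row_stochastic_def)
  then have "A$r$r \<le> 1" using rs by (simp add: row_stochastic_def)
  then show "a \<le> 1" using le[OF arr] by simp
qed

lemmas det = rs arr a_props

lemma spread_Ext:
  assumes "h' \<in> Ext k d h"
  shows "dtraj x1 h' (k+d) = run A h' k (dtraj x1 h k) d"
proof -
  have "dtraj x1 h' k = dtraj x1 h k" by (rule dtraj_cong) (use Ext_agree[OF assms] in auto)
  then show ?thesis using dtraj_run by simp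
qed

lemma step_mono:
  assumes h: "h \<in> H k"
  shows "(\<Sum>h'\<in>Ext k d h. P (k+d) h' * spread (dtraj x1 h' (k+d))) \<le> P k h * spread (dtraj x1 h k)"
proof -
  have "(\<Sum>h'\<in>Ext k d h. P (k+d) h' * spread (dtraj x1 h' (k+d)))
      \<le> (\<Sum>h'\<in>Ext k d h. P (k+d) h' * spread (dtraj x1 h k))"
    using spread_Ext run_spread_mono[OF det]
    by (intro sum_mono mult_left_mono P_nonneg) auto
  also have "\<dots> = P k h * spread (dtraj x1 h k)" using mass[OF h] by (simp add: sum_distrib_right[symmetric])
  finally show ?thesis .
qed

definition \<rho> :: real where "\<rho> = 1 - a^L * \<beta>^L"

lemma rho_props: "0 \<le> \<rho>" "\<rho> < 1"
proof -
  have "0 < a^L * \<beta>^L" using a_props beta_pos by simp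
  moreover have "a^L * \<beta>^L \<le> 1" using a_props beta_pos beta_le1
    by (intro mult_le_one power_le_one) auto
  ultimately show "0 \<le> \<rho>" "\<rho> < 1" by (auto simp: \<rho>_def)
qed

lemma step_contract:
  assumes h: "h \<in> H k"
  shows "(\<Sum>h'\<in>Ext k L h. P (k+L) h' * spread (dtraj x1 h' (k+L))) \<le> \<rho> * (P k h * spread (dtraj x1 h k))"
proof (cases "P k h > 0")
  case False
  then have P0: "P k h = 0" using P_nonneg[of k h] by simp
  then have "\<forall>h'\<in>Ext k L h. P (k+L) h' = 0"
    using mass[OF h, of L] finite_Ext sum_nonneg_eq_0_iff[of "Ext k L h" "P (k+L)"] P_nonneg by auto
  then show ?thesis using P0 by simp
next
  case True
  let ?s = "spread (dtraj x1 h k)"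
  obtain h0 where h0: "\<forall>i\<in>{1..k}. h0 i = h i" "\<beta>^L * P k h \<le> P (k+L) h0" "reach A r h0 k L = UNIV"
    using good[OF True] by blast
  define hs where "hs = restrict h0 {1..k+L}"
  have hsH: "hs \<in> H (k+L)" by (simp add: hs_def H_def)
  have "restrict hs {1..k} = h"
  proof (rule H_eqI[OF _ h])
    show "restrict hs {1..k} \<in> H k" by (simp add: H_def)
  qed (use h0 in \<open>auto simp: hs_def\<close>)
  then have hsE: "hs \<in> Ext k L h" using hsH by (simp add: Ext_def)
  have "E (k+L) hs = E (k+L) h0" by (rule E_cong) (auto simp: hs_def)
  then have Phs: "\<beta>^L * P k h \<le> P (k+L) hs" using h0 by (simp add: P_def)
  have "reach A r hs k L = reach A r h0 k L" by (rule reach_cong) (auto simp: hs_def)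
  then have "spread (run A hs k (dtraj x1 h k) L) \<le> (1 - a^L) * ?s"
    using run_spread_contract[OF det] h0(3) by simp
  then have shs: "spread (dtraj x1 hs (k+L)) \<le> (1 - a^L) * ?s" using spread_Ext[OF hsE] by simp
  have s0: "0 \<le> ?s" by (rule spread_nonneg)
  let ?f = "\<lambda>h'. P (k+L) h' * spread (dtraj x1 h' (k+L))"
  have "(\<Sum>h'\<in>Ext k L h. ?f h') = ?f hs + (\<Sum>h'\<in>Ext k L h - {hs}. ?f h')"
    by (rule sum.remove[OF finite_Ext hsE])
  also have "\<dots> \<le> P (k+L) hs * ((1 - a^L) * ?s) + (\<Sum>h'\<in>Ext k L h - {hs}. P (k+L) h' * ?s)"
    using shs spread_Ext run_spread_mono[OF det]
    by (intro add_mono sum_mono mult_left_mono P_nonneg) auto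
  also have "(\<Sum>h'\<in>Ext k L h - {hs}. P (k+L) h' * ?s) = (P k h - P (k+L) hs) * ?s"
  proof -
    have "(\<Sum>h'\<in>Ext k L h - {hs}. P (k+L) h') = P k h - P (k+L) hs"
      using sum.remove[OF finite_Ext hsE, of "P (k+L)"] mass[OF h, of L] by simp
    then show ?thesis by (simp add: sum_distrib_right[symmetric])
  qed
  also have "P (k+L) hs * ((1 - a^L) * ?s) + (P k h - P (k+L) hs) * ?s = ?s * (P k h - a^L * P (k+L) hs)"
    by (simp add: algebra_simps)
  also have "\<dots> \<le> ?s * (P k h - a^L * (\<beta>^L * P k h))"
    using Phs a_props s0 by (intro mult_left_mono) (auto intro: mult_left_mono)
  also have "\<dots> = \<rho> * (P k h * ?s)" by (simp add: \<rho>_def algebra_simps)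
  finally show ?thesis .
qed

lemma Phi_mono: "\<Phi> x1 (k+d) \<le> \<Phi> x1 k"
  unfolding Phi_group by (unfold \<Phi>_def) (intro sum_mono step_mono)

lemma Phi_contract: "\<Phi> x1 (k+L) \<le> \<rho> * \<Phi> x1 k"
  unfolding Phi_group by (unfold \<Phi>_def sum_distrib_left) (intro sum_mono step_contract)

lemma Phi_pow: "\<Phi> x1 (j*L) \<le> \<rho>^j * \<Phi> x1 0"
proof (induction j)
  case 0 then show ?case by simp
next
  case (Suc j)
  have "\<Phi> x1 (Suc j * L) = \<Phi> x1 (j*L + L)" by (simp add: add.commute)
  also have "\<dots> \<le> \<rho> * \<Phi> x1 (j*L)" by (rule Phi_contract)
  also have "\<dots> \<le> \<rho> * (\<rho>^j * \<Phi> x1 0)" using Suc rho_props by (intro mult_left_mono) auto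
  finally show ?case by simp
qed

lemma Phi_lim: "(\<lambda>k. \<Phi> x1 k) \<longlonglongrightarrow> 0"
proof -
  have b: "\<Phi> x1 k \<le> \<rho>^(k div L) * \<Phi> x1 0" for k
  proof -
    have eq: "k div L * L + k mod L = k" by (rule div_mult_mod_eq)
    have "\<Phi> x1 k \<le> \<Phi> x1 (k div L * L)" using Phi_mono[of x1 "k div L * L" "k mod L"] eq by simp
    also have "\<dots> \<le> \<rho>^(k div L) * \<Phi> x1 0" by (rule Phi_pow)
    finally show ?thesis .
  qed
  have lim: "(\<lambda>n. \<rho>^n) \<longlonglongrightarrow> 0" using rho_props by (intro LIMSEQ_power_zero) simp
  have "(\<lambda>k. \<rho>^(k div L)) \<longlonglongrightarrow> 0"
    by (rule filterlim_compose[OF lim filterlim_at_top_div_const_nat[OF L_pos]])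
  then have l2: "(\<lambda>k. \<rho>^(k div L) * \<Phi> x1 0) \<longlonglongrightarrow> 0"
    by (rule tendsto_mult_left_zero)
  show ?thesis
    by (rule tendsto_sandwich[OF _ _ tendsto_const l2]) (use Phi_nonneg b in auto)
qed

lemma markov:
  assumes eps: "\<epsilon> > 0"
  shows "measure M {\<omega> \<in> space M. disagreement (traj A \<sigma> x1 k \<omega>) \<ge> \<epsilon>} \<le> \<Phi> x1 k / sqrt (\<epsilon> / CARD('n))"
proof -
  define \<delta> where "\<delta> = sqrt (\<epsilon> / CARD('n))"
  have dpos: "\<delta> > 0" using eps by (simp add: \<delta>_def)
  let ?G = "{h \<in> H k. \<delta> \<le> spread (dtraj x1 h k)}"
  have sub: "{\<omega> \<in> space M. disagreement (traj A \<sigma> x1 k \<omega>) \<ge> \<epsilon>} \<subseteq> (\<Union>h\<in>?G. E k h)"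
  proof
    fix \<omega> assume w: "\<omega> \<in> {\<omega> \<in> space M. disagreement (traj A \<sigma> x1 k \<omega>) \<ge> \<epsilon>}"
    let ?h = "hist k \<omega>"
    have wE: "\<omega> \<in> E k ?h" using w E_hist by auto
    then have "traj A \<sigma> x1 k \<omega> = dtraj x1 ?h k" by (intro traj_E) (auto simp: E_alt)
    then have "\<epsilon> \<le> real CARD('n) * (spread (dtraj x1 ?h k))^2"
      using w disagreement_le[of "dtraj x1 ?h k"] by auto
    then have "\<epsilon> / CARD('n) \<le> (spread (dtraj x1 ?h k))^2" by (simp add: divide_le_eq mult.commute)
    then have "\<delta> \<le> sqrt ((spread (dtraj x1 ?h k))^2)" unfolding \<delta>_def by (rule real_sqrt_le_mono)
    then have "\<delta> \<le> spread (dtraj x1 ?h k)" using spread_nonneg[of "dtraj x1 ?h k"] by simp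
    then show "\<omega> \<in> (\<Union>h\<in>?G. E k h)" using wE hist_H by blast
  qed
  have "measure M {\<omega> \<in> space M. disagreement (traj A \<sigma> x1 k \<omega>) \<ge> \<epsilon>} \<le> measure M (\<Union>h\<in>?G. E k h)"
    using finite_H by (intro finite_measure_mono[OF sub] sets.finite_UN E_sets) auto
  also have "\<dots> \<le> (\<Sum>h\<in>?G. P k h)" unfolding P_def
    using finite_H by (intro measure_UNION_le E_sets) auto
  also have "\<dots> \<le> (\<Sum>h\<in>?G. P k h * spread (dtraj x1 h k) / \<delta>)"
    using dpos P_nonneg by (intro sum_mono) (auto simp: le_divide_eq intro: mult_left_mono)
  also have "\<dots> \<le> (\<Sum>h\<in>H k. P k h * spread (dtraj x1 h k) / \<delta>)"
    using finite_H dpos by (intro sum_mono2) (auto intro!: divide_nonneg_pos mult_nonneg_nonneg P_nonneg spread_nonneg)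
  also have "\<dots> = \<Phi> x1 k / \<delta>" by (simp add: \<Phi>_def sum_divide_distrib)
  finally show ?thesis by (simp add: \<delta>_def)
qed

lemma main: "\<forall>\<epsilon>>0. ((\<lambda>k. measure M {\<omega> \<in> space M. disagreement (traj A \<sigma> x1 k \<omega>) \<ge> \<epsilon>}) \<longlonglongrightarrow> 0)"
proof (intro allI impI)
  fix \<epsilon> :: real assume eps: "\<epsilon> > 0"
  have l: "(\<lambda>k. \<Phi> x1 k / sqrt (\<epsilon> / CARD('n))) \<longlonglongrightarrow> 0" by (rule tendsto_divide_zero[OF Phi_lim])
  show "(\<lambda>k. measure M {\<omega> \<in> space M. disagreement (traj A \<sigma> x1 k \<omega>) \<ge> \<epsilon>}) \<longlonglongrightarrow> 0"
    by (rule tendsto_sandwich[OF _ _ tendsto_const l]) (use markov[OF eps] in auto)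
qed

end
theorem corollary1:
  fixes A :: "real^'n^'n"
    and M :: "'a measure"
    and \<sigma> :: "nat \<Rightarrow> 'a \<Rightarrow> 'n set"
    and x1 :: "real^'n"
  assumes "prob_space M"
    and "\<And>k. k \<ge> 1 \<Longrightarrow> \<sigma> k \<in> M \<rightarrow>\<^sub>M count_space UNIV"
    and "row_stochastic A"
    and "rooted A" and "\<exists>r\<in>roots A. A$r$r > 0"
    and "\<alpha> > 0"
    and "\<forall>k\<ge>1. \<forall>h s. cond_prob M \<sigma> k h k s \<noteq> 0 \<longrightarrow> cond_prob M \<sigma> k h k s \<ge> \<alpha>"
    and "(q::nat) > 0"
    and "\<forall>k\<ge>1. \<forall>h. measure M (past_event M \<sigma> k h) \<noteq> 0 \<longrightarrow>
           (\<Union>w\<in>{0..<q}. \<Union>{s. cond_prob M \<sigma> k h (k + w) s \<noteq> 0}) = UNIV"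
  shows "\<forall>\<epsilon>>0. ((\<lambda>k. measure M {\<omega> \<in> space M. disagreement (traj A \<sigma> x1 k \<omega>) \<ge> \<epsilon>})
            \<longlonglongrightarrow> 0)"
proof -
  obtain r where r: "r \<in> roots A" "A$r$r > 0" using assms(5) by blast
  interpret c: cons M A \<sigma> \<alpha> q r
  proof (intro cons.intro cons_axioms.intro)
    show "prob_space M" by (rule assms(1))
  qed (use assms r in \<open>simp_all\<close>)
  show ?thesis by (rule c.main)
qed

end
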